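(* Let $\alpha=(n_1,m_1,\dots,n_p,m_p)\in\mathbb Z_{\ge0}^{2p}$, $a=(a_{hk})\in I(\alpha)$ and $i,j\in\{1,\dots,p\}$. (1) Suppose $a_{ij}=L_{ij}(\alpha,a)$. If $L_{ij}(\alpha,a)=m_j-\sum_{h=1}^{i-1}a_{hj}$, then $a_{qj}=0$ for all $q=i+1,\dots,p$. If $L_{ij}(\alpha,a)=n_i-\sum_{k=1}^{j-1}a_{ik}$, then $a_{it}=0$ for all $t=j+1,\dots,p$. (2) Suppose $a_{ij}=l_{ij}(\alpha,a)$ and $l_{ij}(\alpha,a)=\sum_{h=1}^i n_h-\sum_{h=j+1}^p m_h-\sum_{h\le i,\,k\le j,\,(h,k)\neq(i,j)}a_{hk}$. Then $a_{it}=m_t-\sum_{h=1}^{i-1}a_{ht}$ for all $t=j+1,\dots,p$; $a_{qj}=n_q-\sum_{k=1}^{j-1}a_{qk}$ for all $q=i+1,\dots,p$; and $a_{qt}=0$ for all $q=i+1,\dots,p$ and $t=j+1,\dots,p$.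
   Context: $I(\alpha)$ is the set of $a=(a_{11},\dots,a_{1p},a_{21},\dots,a_{pp})\in\mathbb Z_{\ge0}^{p^2}$ with $l_{ij}(\alpha,a)\le a_{ij}\le L_{ij}(\alpha,a)$ for all $i,j=1,\dots,p$, where $$l_{ij}(\alpha,a)=\max\Big(0,\ \sum_{h=1}^i n_h-\sum_{h=j+1}^p m_h-\sum_{\substack{h\le i,\,k\le j\\ (h,k)\neq(i,j)}}a_{hk}\Big),\qquad L_{ij}(\alpha,a)=\min\Big(n_i-\sum_{h=1}^{j-1}a_{ih},\ m_j-\sum_{h=1}^{i-1}a_{hj}\Big).$$ (The paper writes $\wedge$ for this max and $\vee$ for this min.) *)

theory Defs
  imports Main
begin

text \<open>alpha = (n_1,m_1,...,n_p,m_p) is given by two functions n m on indices 1..p;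
  a = (a_hk) is a function on index pairs (values outside 1..p are irrelevant).\<close>

definition lbd :: "nat \<Rightarrow> (nat \<Rightarrow> int) \<Rightarrow> (nat \<Rightarrow> int) \<Rightarrow> (nat \<Rightarrow> nat \<Rightarrow> int) \<Rightarrow> nat \<Rightarrow> nat \<Rightarrow> int" where
  "lbd p n m a i j = max 0 ((\<Sum>h=1..i. n h) - (\<Sum>h=j+1..p. m h)
      - (\<Sum>(h,k)\<in>({1..i} \<times> {1..j}) - {(i,j)}. a h k))"

definition Ubd :: "(nat \<Rightarrow> int) \<Rightarrow> (nat \<Rightarrow> int) \<Rightarrow> (nat \<Rightarrow> nat \<Rightarrow> int) \<Rightarrow> nat \<Rightarrow> nat \<Rightarrow> int" where
  "Ubd n m a i j = min (n i - (\<Sum>h=1..j-1. a i h)) (m j - (\<Sum>h=1..i-1. a h j))"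

definition inI :: "nat \<Rightarrow> (nat \<Rightarrow> int) \<Rightarrow> (nat \<Rightarrow> int) \<Rightarrow> (nat \<Rightarrow> nat \<Rightarrow> int) \<Rightarrow> bool" where
  "inI p n m a \<longleftrightarrow> (\<forall>i\<in>{1..p}. \<forall>j\<in>{1..p}.
      0 \<le> a i j \<and> lbd p n m a i j \<le> a i j \<and> a i j \<le> Ubd n m a i j)"

end

theory Submission
  imports Defs
begin

lemma split_ivl: "(i::nat) \<le> p \<Longrightarrow> sum (f::nat\<Rightarrow>int) {1..p} = sum f {1..i} + sum f {i+1..p}"
proof -
  assume "i \<le> p"
  then have "{1..p} = {1..i} \<union> {i+1..p}" by auto
  then show ?thesis by (simp add: sum.union_disjoint ivl_disj_int)
qed

lemma last_ivl: "(i::nat) \<ge> 1 \<Longrightarrow> sum (f::nat\<Rightarrow>int) {1..i} = sum f {1..i-1} + f i"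
proof -
  assume "i \<ge> 1"
  then have "sum f {1..i} = sum f {1..i-1} + sum f {i-1+1..i}" using split_ivl[of "i-1" i f] by simp
  moreover have "{i-1+1..i} = {i}" using \<open>i \<ge> 1\<close> by auto
  ultimately show ?thesis by simp
qed

lemma sum_eq_from_le:
  fixes f g :: "nat \<Rightarrow> int"
  assumes "finite A" "\<forall>x\<in>A. f x \<le> g x" "sum g A \<le> sum f A"
  shows "\<forall>x\<in>A. f x = g x"
proof (rule ccontr)
  assume "\<not> (\<forall>x\<in>A. f x = g x)"
  then obtain x where "x \<in> A" "f x < g x" using assms(2) by force
  then have "sum f A < sum g A" using assms by (intro sum_strict_mono_ex1) auto
  then show False using assms(3) by simp
qed

theorem propositionA4:
  fixes p :: nat and n m :: "nat \<Rightarrow> int" and a :: "nat \<Rightarrow> nat \<Rightarrow> int" and i j :: nat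
  assumes alpha: "\<forall>h\<in>{1..p}. 0 \<le> n h \<and> 0 \<le> m h"
    and aI: "inI p n m a"
    and i: "i \<in> {1..p}" and j: "j \<in> {1..p}"
  shows
   "(a i j = Ubd n m a i j \<longrightarrow>
       (Ubd n m a i j = m j - (\<Sum>h=1..i-1. a h j) \<longrightarrow> (\<forall>q\<in>{i+1..p}. a q j = 0)) \<and>
       (Ubd n m a i j = n i - (\<Sum>k=1..j-1. a i k) \<longrightarrow> (\<forall>t\<in>{j+1..p}. a i t = 0)))
    \<and>
    ((a i j = lbd p n m a i j \<and>
      lbd p n m a i j = (\<Sum>h=1..i. n h) - (\<Sum>h=j+1..p. m h)
         - (\<Sum>(h,k)\<in>({1..i} \<times> {1..j}) - {(i,j)}. a h k)) \<longrightarrow>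
       (\<forall>t\<in>{j+1..p}. a i t = m t - (\<Sum>h=1..i-1. a h t)) \<and>
       (\<forall>q\<in>{i+1..p}. a q j = n q - (\<Sum>k=1..j-1. a q k)) \<and>
       (\<forall>q\<in>{i+1..p}. \<forall>t\<in>{j+1..p}. a q t = 0))"
proof -
  have nn: "\<And>h k. h \<in> {1..p} \<Longrightarrow> k \<in> {1..p} \<Longrightarrow> 0 \<le> a h k"
    using aI unfolding inI_def by blast
  have ub1: "\<And>h k. h \<in> {1..p} \<Longrightarrow> k \<in> {1..p} \<Longrightarrow> a h k \<le> m k - (\<Sum>q=1..h-1. a q k)"
    using aI unfolding inI_def Ubd_def by fastforce
  have ub2: "\<And>h k. h \<in> {1..p} \<Longrightarrow> k \<in> {1..p} \<Longrightarrow> a h k \<le> n h - (\<Sum>t=1..k-1. a h t)"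
    using aI unfolding inI_def Ubd_def by fastforce
  have colb: "\<And>q k. q \<in> {1..p} \<Longrightarrow> k \<in> {1..p} \<Longrightarrow> (\<Sum>h=1..q. a h k) \<le> m k"
    using ub1 last_ivl by fastforce
  have rowb: "\<And>q k. q \<in> {1..p} \<Longrightarrow> k \<in> {1..p} \<Longrightarrow> (\<Sum>t=1..k. a q t) \<le> n q"
    using ub2 last_ivl by fastforce
  have colmono: "\<And>q q' k. q \<le> q' \<Longrightarrow> q' \<le> p \<Longrightarrow> k \<in> {1..p} \<Longrightarrow> (\<Sum>h=1..q. a h k) \<le> (\<Sum>h=1..q'. a h k)"
    by (intro sum_mono2) (auto intro: nn)
  have rowmono: "\<And>q t t'. t \<le> t' \<Longrightarrow> t' \<le> p \<Longrightarrow> q \<in> {1..p} \<Longrightarrow> (\<Sum>k=1..t. a q k) \<le> (\<Sum>k=1..t'. a q k)"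
    by (intro sum_mono2) (auto intro: nn)
  define S where "S = (\<lambda>x y. \<Sum>h=1..x. \<Sum>k=1..y. a h k)"
  define N where "N = (\<lambda>x. \<Sum>h=1..x. n h)"
  define Mg where "Mg = (\<lambda>y. \<Sum>h=y+1..p. m h)"
  have Sd: "\<And>x y. x \<in> {1..p} \<Longrightarrow> y \<in> {1..p} \<Longrightarrow>
     (\<Sum>(h,k)\<in>({1..x} \<times> {1..y}) - {(x,y)}. a h k) = S x y - a x y"
    by (simp add: sum_diff1 S_def sum.cartesian_product)
  have lowS: "\<And>x y. x \<in> {1..p} \<Longrightarrow> y \<in> {1..p} \<Longrightarrow> N x - Mg y \<le> S x y"
  proof -
    fix x y assume xy: "x \<in> {1..p}" "y \<in> {1..p}"
    have "lbd p n m a x y \<le> a x y" using aI xy unfolding inI_def by blast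
    then show "N x - Mg y \<le> S x y" using Sd[OF xy] unfolding lbd_def N_def Mg_def by simp
  qed
  have part1: "a i j = Ubd n m a i j \<longrightarrow>
       (Ubd n m a i j = m j - (\<Sum>h=1..i-1. a h j) \<longrightarrow> (\<forall>q\<in>{i+1..p}. a q j = 0)) \<and>
       (Ubd n m a i j = n i - (\<Sum>k=1..j-1. a i k) \<longrightarrow> (\<forall>t\<in>{j+1..p}. a i t = 0))"
  proof (intro impI conjI ballI)
    fix q assume e1: "a i j = Ubd n m a i j" and e2: "Ubd n m a i j = m j - (\<Sum>h=1..i-1. a h j)"
      and q: "q \<in> {i+1..p}"
    have qq: "q \<in> {1..p}" using q i by auto
    have "(\<Sum>h=1..i. a h j) \<le> (\<Sum>h=1..q-1. a h j)" using q j by (intro colmono) auto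
    moreover have "(\<Sum>h=1..i. a h j) = (\<Sum>h=1..i-1. a h j) + a i j" using i last_ivl by auto
    ultimately show "a q j = 0" using ub1[OF qq j] nn[OF qq j] e1 e2 by linarith
  next
    fix t assume e1: "a i j = Ubd n m a i j" and e2: "Ubd n m a i j = n i - (\<Sum>k=1..j-1. a i k)"
      and t: "t \<in> {j+1..p}"
    have tt: "t \<in> {1..p}" using t j by auto
    have "(\<Sum>k=1..j. a i k) \<le> (\<Sum>k=1..t-1. a i k)" using t i by (intro rowmono) auto
    moreover have "(\<Sum>k=1..j. a i k) = (\<Sum>k=1..j-1. a i k) + a i j" using j last_ivl by auto
    ultimately show "a i t = 0" using ub2[OF i tt] nn[OF i tt] e1 e2 by linarith
  qed
  have part2: "(a i j = lbd p n m a i j \<and>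
      lbd p n m a i j = (\<Sum>h=1..i. n h) - (\<Sum>h=j+1..p. m h)
         - (\<Sum>(h,k)\<in>({1..i} \<times> {1..j}) - {(i,j)}. a h k)) \<longrightarrow>
       (\<forall>t\<in>{j+1..p}. a i t = m t - (\<Sum>h=1..i-1. a h t)) \<and>
       (\<forall>q\<in>{i+1..p}. a q j = n q - (\<Sum>k=1..j-1. a q k)) \<and>
       (\<forall>q\<in>{i+1..p}. \<forall>t\<in>{j+1..p}. a q t = 0)"
  proof (intro impI)
    assume H: "a i j = lbd p n m a i j \<and>
      lbd p n m a i j = (\<Sum>h=1..i. n h) - (\<Sum>h=j+1..p. m h)
         - (\<Sum>(h,k)\<in>({1..i} \<times> {1..j}) - {(i,j)}. a h k)"
    have E: "S i j = N i - Mg j" using H Sd[OF i j] unfolding N_def Mg_def by simp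
    have jp: "j \<le> p" "i \<le> p" using i j by auto
    have p1: "p \<in> {1..p}" using i by auto
    have "S i p = S i j + (\<Sum>h=1..i. \<Sum>k=j+1..p. a h k)"
      unfolding S_def using split_ivl[OF jp(1)] by (simp add: sum.distrib)
    also have "(\<Sum>h=1..i. \<Sum>k=j+1..p. a h k) = (\<Sum>k=j+1..p. \<Sum>h=1..i. a h k)"
      by (rule sum.swap)
    finally have "S i p = S i j + (\<Sum>k=j+1..p. \<Sum>h=1..i. a h k)" .
    moreover have "N i - Mg p \<le> S i p" using lowS[OF i p1] .
    moreover have "Mg p = 0" unfolding Mg_def by simp
    ultimately have "(\<Sum>k=j+1..p. m k) \<le> (\<Sum>k=j+1..p. \<Sum>h=1..i. a h k)" using E unfolding Mg_def by simp
    then have colfull: "\<forall>k\<in>{j+1..p}. (\<Sum>h=1..i. a h k) = m k"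
      using colb i j by (intro sum_eq_from_le) auto
    have "S p j = S i j + (\<Sum>q=i+1..p. \<Sum>k=1..j. a q k)"
      unfolding S_def using split_ivl[OF jp(2)] by simp
    moreover have "N p = N i + (\<Sum>q=i+1..p. n q)" unfolding N_def using split_ivl[OF jp(2)] by simp
    moreover have "N p - Mg j \<le> S p j" using lowS[OF p1 j] .
    ultimately have "(\<Sum>q=i+1..p. n q) \<le> (\<Sum>q=i+1..p. \<Sum>k=1..j. a q k)" using E by simp
    then have rowfull: "\<forall>q\<in>{i+1..p}. (\<Sum>k=1..j. a q k) = n q"
      using rowb i j by (intro sum_eq_from_le) auto
    show "(\<forall>t\<in>{j+1..p}. a i t = m t - (\<Sum>h=1..i-1. a h t)) \<and>
       (\<forall>q\<in>{i+1..p}. a q j = n q - (\<Sum>k=1..j-1. a q k)) \<and>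
       (\<forall>q\<in>{i+1..p}. \<forall>t\<in>{j+1..p}. a q t = 0)"
    proof (intro conjI ballI)
      fix t assume t: "t \<in> {j+1..p}"
      then show "a i t = m t - (\<Sum>h=1..i-1. a h t)" using colfull last_ivl[of i "\<lambda>h. a h t"] i by auto
    next
      fix q assume q: "q \<in> {i+1..p}"
      then show "a q j = n q - (\<Sum>k=1..j-1. a q k)" using rowfull last_ivl[of j "\<lambda>k. a q k"] j by auto
    next
      fix q t assume q: "q \<in> {i+1..p}" and t: "t \<in> {j+1..p}"
      have tt: "t \<in> {1..p}" using t j by auto
      have "(\<Sum>h=1..p. a h t) = (\<Sum>h=1..i. a h t) + (\<Sum>h=i+1..p. a h t)" using split_ivl[OF jp(2)] .
      moreover have "(\<Sum>h=1..p. a h t) \<le> m t" using colb[OF p1 tt] .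
      moreover have "a q t \<le> (\<Sum>h=i+1..p. a h t)"
        using q i tt by (intro member_le_sum) (auto intro: nn)
      moreover have "0 \<le> a q t" using q i tt by (intro nn) auto
      ultimately show "a q t = 0" using colfull t by auto
    qed
  qed
  show ?thesis using part1 part2 by blast
qed

end
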